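(* The assignments $\mathcal{A}\mapsto\big(\mathbf{GNS}_{\mathcal{A}}:\mathbf{States}(\mathcal{A})\to\mathbf{Rep}(\mathcal{A})\big)$ for each $C^*$-algebra $\mathcal{A}$ and $(f:\mathcal{A}'\to\mathcal{A})\mapsto\big(\mathbf{GNS}_f:\mathbf{GNS}_{\mathcal{A}'}\circ\mathbf{States}(f)\Rightarrow\mathbf{Rep}(f)\circ\mathbf{GNS}_{\mathcal{A}}\big)$ for each morphism of $C^*$-algebras define an oplax-natural transformation $\mathbf{GNS}:\mathbf{States}\Rightarrow\mathbf{Rep}$ between functors $\mathbf{C^*\text{-}Alg}^{\mathrm{op}}\to\mathbf{Cat}$.
   Context: All $C^*$-algebras are unital, and a morphism $f:\mathcal{A}'\to\mathcal{A}$ is a bounded linear map with $f(a^* )=f(a)^*$, $f(ab)=f(a)f(b)$, $f(1)=1$; $\mathbf{C^*\text{-}Alg}$ is this category, viewed as a strict 2-category with only identity 2-morphisms; $\mathbf{Cat}$ is the strict 2-category of categories, functors and natural transformations. A state on $\mathcal{A}$ is a bounded linear $\omega:\mathcal{A}\to\mathbb{C}$ with $\omega(1)=1$ and $\omega(a^*a)\ge0$. $\mathbf{States}(\mathcal{A})$ is the discrete category of states on $\mathcal{A}$; $\mathbf{States}(f)(\omega)=\omega\circ f$. $\mathbf{Rep}(\mathcal{A})$ has objects $(\pi,\mathcal{H})$ with $\mathcal{H}$ a Hilbert space and $\pi:\mathcal{A}\to\mathcal{B}(\mathcal{H})$ a unital $*$-homomorphism, and morphisms intertwiners (bounded linear $L$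 with $L\pi(a)=\pi'(a)L$ for all $a$); $\mathbf{Rep}(f)$ sends $(\pi,\mathcal{H})$ to $(\pi\circ f,\mathcal{H})$ and $L$ to $L$. For a state $\omega$ on $\mathcal{A}$: $\mathcal{N}_\omega=\{x:\omega(x^*x)=0\}$, $\mathcal{H}_\omega$ is the completion of $\mathcal{A}/\mathcal{N}_\omega$ under $\langle[b],[a]\rangle_\omega=\omega(b^*a)$, $\pi_\omega(a)$ is the bounded extension of $[b]\mapsto[ab]$, and $\mathbf{GNS}_{\mathcal{A}}(\omega)=(\pi_\omega,\mathcal{H}_\omega)$. For $f:\mathcal{A}'\to\mathcal{A}$ and a state $\omega$ on $\mathcal{A}$, $\mathbf{GNS}_f(\omega)=L_f:\mathcal{H}_{\omega\circ f}\to\mathcal{H}_\omega$ is the bounded extension of $[a']\mapsto[f(a')]$, an intertwiner $(\pi_{\omega\circ f},\mathcal{H}_{\omega\circ f})\to(\pi_\omega\circ f,\mathcal{H}_\omega)$ of representations of $\mathcal{A}'$. For strict 2-functors $F,G:\mathcal{C}\to\mathcal{D}$, an oplax-natural transformation $\rho:F\Rightarrow G$ assigns to each object $x$ a 1-morphism $\rho(x):F(x)\to G(x)$ and to each 1-morphism $\alpha:x\to y$ a (not necessarily invertible) 2-morphism $\rho(\alpha):\rho(y)\circ F(\alpha)\Rightarrow G(\alpha)\circ\rho(x)$, such that $\rho(\mathrm{id}_x)=\mathrm{id}_{\rho(x)}$, $\rho(\beta\alpha)=(\mathrm{id}_{G(\beta)}\circ\rho(\alpha))\cdot(\rho(\beta)\circ\mathrm{id}_{F(\alpha)})$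 for composable $\alpha,\beta$, and the naturality condition with respect to 2-morphisms of $\mathcal{C}$ holds. *)

theory Defs
  imports Complex_Main
begin

class cstar_algebra = real_normed_algebra_1 + banach +
  fixes scaleC :: "complex \<Rightarrow> 'a \<Rightarrow> 'a"
    and cstar :: "'a \<Rightarrow> 'a"
  assumes scaleC_of_real: "scaleC (complex_of_real r) x = scaleR r x"
    and scaleC_add_right: "scaleC c (x + y) = scaleC c x + scaleC c y"
    and scaleC_add_left: "scaleC (c + d) x = scaleC c x + scaleC d x"
    and scaleC_scaleC: "scaleC c (scaleC d x) = scaleC (c * d) x"
    and scaleC_one: "scaleC 1 x = x"
    and norm_scaleC: "norm (scaleC c x) = cmod c * norm x"
    and mult_scaleC_left: "scaleC c x * y = scaleC c (x * y)"
    and mult_scaleC_right: "x * scaleC c y = scaleC c (x * y)"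
    and cstar_cstar: "cstar (cstar x) = x"
    and cstar_add: "cstar (x + y) = cstar x + cstar y"
    and cstar_scaleC: "cstar (scaleC c x) = scaleC (cnj c) (cstar x)"
    and cstar_mult: "cstar (x * y) = cstar y * cstar x"
    and cstar_identity: "norm (cstar x * x) = (norm x)^2"

definition cstar_hom :: "('b::cstar_algebra \<Rightarrow> 'a::cstar_algebra) \<Rightarrow> bool" where
  "cstar_hom f \<longleftrightarrow>
     (\<forall>x y. f (x + y) = f x + f y) \<and>
     (\<forall>c x. f (scaleC c x) = scaleC c (f x)) \<and>
     (\<exists>K. \<forall>x. norm (f x) \<le> K * norm x) \<and>
     (\<forall>x. f (cstar x) = cstar (f x)) \<and>
     (\<forall>x y. f (x * y) = f x * f y) \<and>
     f 1 = 1"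

text \<open>States: bounded linear, normalised, positive functionals
  (\<open>\<omega>(a*a) \<ge> 0\<close> in \<open>\<complex>\<close> means: real and nonnegative).\<close>

definition is_state :: "('a::cstar_algebra \<Rightarrow> complex) \<Rightarrow> bool" where
  "is_state \<omega> \<longleftrightarrow>
     (\<forall>x y. \<omega> (x + y) = \<omega> x + \<omega> y) \<and>
     (\<forall>c x. \<omega> (scaleC c x) = c * \<omega> x) \<and>
     (\<exists>K. \<forall>x. cmod (\<omega> x) \<le> K * norm x) \<and>
     \<omega> 1 = 1 \<and>
     (\<forall>a. Im (\<omega> (cstar a * a)) = 0 \<and> 0 \<le> Re (\<omega> (cstar a * a)))"

record 'h hilb =
  hcarrier :: "'h set"
  hadd :: "'h \<Rightarrow> 'h \<Rightarrow> 'h"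
  hzero :: "'h"
  hscale :: "complex \<Rightarrow> 'h \<Rightarrow> 'h"
  hinner :: "'h \<Rightarrow> 'h \<Rightarrow> complex"

definition hnorm :: "'h hilb \<Rightarrow> 'h \<Rightarrow> real" where
  "hnorm H x = sqrt (Re (hinner H x x))"

definition hdist :: "'h hilb \<Rightarrow> 'h \<Rightarrow> 'h \<Rightarrow> real" where
  "hdist H x y = hnorm H (hadd H x (hscale H (-1) y))"

text \<open>Inner product linear in the second, conjugate-linear in the first argument
  (as in \<open>\<langle>[b],[a]\<rangle> = \<omega>(b*a)\<close>).\<close>

definition hilbert_space :: "'h hilb \<Rightarrow> bool" where
  "hilbert_space H \<longleftrightarrow>
     (let V = hcarrier H in
      hzero H \<in> V \<and>
      (\<forall>x\<in>V. \<forall>y\<in>V. hadd H x y \<in> V) \<and>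
      (\<forall>c. \<forall>x\<in>V. hscale H c x \<in> V) \<and>
      (\<forall>x\<in>V. \<forall>y\<in>V. \<forall>z\<in>V. hadd H (hadd H x y) z = hadd H x (hadd H y z)) \<and>
      (\<forall>x\<in>V. \<forall>y\<in>V. hadd H x y = hadd H y x) \<and>
      (\<forall>x\<in>V. hadd H x (hzero H) = x) \<and>
      (\<forall>x\<in>V. hadd H x (hscale H (-1) x) = hzero H) \<and>
      (\<forall>x\<in>V. hscale H 1 x = x) \<and>
      (\<forall>a b. \<forall>x\<in>V. hscale H a (hscale H b x) = hscale H (a * b) x) \<and>
      (\<forall>a b. \<forall>x\<in>V. hscale H (a + b) x = hadd H (hscale H a x) (hscale H b x)) \<and>
      (\<forall>a. \<forall>x\<in>V. \<forall>y\<in>V. hscale H a (hadd H x y) = hadd H (hscale H a x) (hscale H a y)) \<and>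
      (\<forall>x\<in>V. \<forall>y\<in>V. \<forall>z\<in>V. hinner H x (hadd H y z) = hinner H x y + hinner H x z) \<and>
      (\<forall>c. \<forall>x\<in>V. \<forall>y\<in>V. hinner H x (hscale H c y) = c * hinner H x y) \<and>
      (\<forall>x\<in>V. \<forall>y\<in>V. hinner H y x = cnj (hinner H x y)) \<and>
      (\<forall>x\<in>V. 0 \<le> Re (hinner H x x)) \<and>
      (\<forall>x\<in>V. hinner H x x = 0 \<longrightarrow> x = hzero H) \<and>
      (\<forall>X. (\<forall>n. X n \<in> V) \<and>
           (\<forall>e>0. \<exists>N. \<forall>m\<ge>N. \<forall>n\<ge>N. hdist H (X m) (X n) < e) \<longrightarrow>
           (\<exists>x\<in>V. (\<lambda>n. hdist H (X n) x) \<longlonglongrightarrow> 0)))"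

text \<open>Bounded linear maps \<open>H \<rightarrow> H'\<close> (only their values on the carrier matter).\<close>

definition bounded_linear_op :: "'h hilb \<Rightarrow> 'k hilb \<Rightarrow> ('h \<Rightarrow> 'k) \<Rightarrow> bool" where
  "bounded_linear_op H H' L \<longleftrightarrow>
     (\<forall>x\<in>hcarrier H. L x \<in> hcarrier H') \<and>
     (\<forall>x\<in>hcarrier H. \<forall>y\<in>hcarrier H. L (hadd H x y) = hadd H' (L x) (L y)) \<and>
     (\<forall>c. \<forall>x\<in>hcarrier H. L (hscale H c x) = hscale H' c (L x)) \<and>
     (\<exists>K. \<forall>x\<in>hcarrier H. hnorm H' (L x) \<le> K * hnorm H x)"

definition rep_obj :: "(('a::cstar_algebra) \<Rightarrow> 'h \<Rightarrow> 'h) \<times> 'h hilb \<Rightarrow> bool" where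
  "rep_obj R \<longleftrightarrow> (case R of (\<pi>, H) \<Rightarrow>
     hilbert_space H \<and>
     (\<forall>a. bounded_linear_op H H (\<pi> a)) \<and>
     (\<forall>x\<in>hcarrier H. \<pi> 1 x = x) \<and>
     (\<forall>a b. \<forall>x\<in>hcarrier H. \<pi> (a + b) x = hadd H (\<pi> a x) (\<pi> b x)) \<and>
     (\<forall>c a. \<forall>x\<in>hcarrier H. \<pi> (scaleC c a) x = hscale H c (\<pi> a x)) \<and>
     (\<forall>a b. \<forall>x\<in>hcarrier H. \<pi> (a * b) x = \<pi> a (\<pi> b x)) \<and>
     (\<forall>a. \<forall>x\<in>hcarrier H. \<forall>y\<in>hcarrier H.
         hinner H (\<pi> (cstar a) x) y = hinner H x (\<pi> a y)))"

definition intertwiner ::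
  "(('a::cstar_algebra) \<Rightarrow> 'h \<Rightarrow> 'h) \<times> 'h hilb \<Rightarrow> ('a \<Rightarrow> 'k \<Rightarrow> 'k) \<times> 'k hilb
     \<Rightarrow> ('h \<Rightarrow> 'k) \<Rightarrow> bool" where
  "intertwiner R R' L \<longleftrightarrow> (case R of (\<pi>, H) \<Rightarrow> case R' of (\<pi>', H') \<Rightarrow>
     bounded_linear_op H H' L \<and>
     (\<forall>a. \<forall>x\<in>hcarrier H. L (\<pi> a x) = \<pi>' a (L x)))"

text \<open>\<open>Rep(f)\<close> on objects: \<open>(\<pi>, H) \<mapsto> (\<pi> \<circ> f, H)\<close> (on morphisms it is the identity).\<close>

definition Rep_map :: "('b \<Rightarrow> 'a) \<Rightarrow> ('a \<Rightarrow> 'h \<Rightarrow> 'h) \<times> 'h hilb \<Rightarrow> ('b \<Rightarrow> 'h \<Rightarrow> 'h) \<times> 'h hilb" where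
  "Rep_map f R = (case R of (\<pi>, H) \<Rightarrow> (\<lambda>a'. \<pi> (f a'), H))"

text \<open>\<open>\<H>\<^sub>\<omega>\<close> is realised as the completion of \<open>A/N\<^sub>\<omega>\<close>: equivalence classes of sequences in \<open>A\<close>
  that are Cauchy for the seminorm \<open>a \<mapsto> \<omega>(a*a)\<^sup>1\<^sup>/\<^sup>2\<close>; the class of a constant sequence
  \<open>a\<close> is \<open>[a]\<close>.\<close>

definition gns_sn :: "('a::cstar_algebra \<Rightarrow> complex) \<Rightarrow> 'a \<Rightarrow> real" where
  "gns_sn \<omega> a = sqrt (Re (\<omega> (cstar a * a)))"

definition gns_cauchy :: "('a::cstar_algebra \<Rightarrow> complex) \<Rightarrow> (nat \<Rightarrow> 'a) \<Rightarrow> bool" where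
  "gns_cauchy \<omega> X \<longleftrightarrow> (\<forall>e>0. \<exists>N. \<forall>m\<ge>N. \<forall>n\<ge>N. gns_sn \<omega> (X m - X n) < e)"

definition gns_equiv :: "('a::cstar_algebra \<Rightarrow> complex) \<Rightarrow> (nat \<Rightarrow> 'a) \<Rightarrow> (nat \<Rightarrow> 'a) \<Rightarrow> bool" where
  "gns_equiv \<omega> X Y \<longleftrightarrow> (\<lambda>n. gns_sn \<omega> (X n - Y n)) \<longlonglongrightarrow> 0"

definition gns_cls :: "('a::cstar_algebra \<Rightarrow> complex) \<Rightarrow> (nat \<Rightarrow> 'a) \<Rightarrow> (nat \<Rightarrow> 'a) set" where
  "gns_cls \<omega> X = {Y. gns_cauchy \<omega> Y \<and> gns_equiv \<omega> X Y}"

definition gns_repr :: "(nat \<Rightarrow> 'a) set \<Rightarrow> nat \<Rightarrow> 'a" where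
  "gns_repr u = (SOME X. X \<in> u)"

definition GNS_space :: "('a::cstar_algebra \<Rightarrow> complex) \<Rightarrow> (nat \<Rightarrow> 'a) set hilb" where
  "GNS_space \<omega> =
     \<lparr> hcarrier = {gns_cls \<omega> X | X. gns_cauchy \<omega> X},
       hadd = (\<lambda>u v. gns_cls \<omega> (\<lambda>n. gns_repr u n + gns_repr v n)),
       hzero = gns_cls \<omega> (\<lambda>n. 0),
       hscale = (\<lambda>c u. gns_cls \<omega> (\<lambda>n. scaleC c (gns_repr u n))),
       hinner = (\<lambda>u v. lim (\<lambda>n. \<omega> (cstar (gns_repr u n) * gns_repr v n))) \<rparr>"

text \<open>\<open>\<pi>\<^sub>\<omega>(a)\<close>: the bounded extension of \<open>[b] \<mapsto> [ab]\<close>.\<close>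

definition GNS_rep :: "('a::cstar_algebra \<Rightarrow> complex) \<Rightarrow> 'a \<Rightarrow> (nat \<Rightarrow> 'a) set \<Rightarrow> (nat \<Rightarrow> 'a) set" where
  "GNS_rep \<omega> a u = gns_cls \<omega> (\<lambda>n. a * gns_repr u n)"

definition GNS :: "('a::cstar_algebra \<Rightarrow> complex)
    \<Rightarrow> ('a \<Rightarrow> (nat \<Rightarrow> 'a) set \<Rightarrow> (nat \<Rightarrow> 'a) set) \<times> (nat \<Rightarrow> 'a) set hilb" where
  "GNS \<omega> = (GNS_rep \<omega>, GNS_space \<omega>)"

text \<open>\<open>GNS\<^sub>f(\<omega>) = L\<^sub>f : \<H>\<^sub>\<omega>\<^sub>\<circ>\<^sub>f \<rightarrow> \<H>\<^sub>\<omega>\<close>: the bounded extension of \<open>[a'] \<mapsto> [f(a')]\<close>.\<close>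

definition GNS_mor :: "('b::cstar_algebra \<Rightarrow> 'a::cstar_algebra) \<Rightarrow> ('a \<Rightarrow> complex)
    \<Rightarrow> (nat \<Rightarrow> 'b) set \<Rightarrow> (nat \<Rightarrow> 'a) set" where
  "GNS_mor f \<omega> u = gns_cls \<omega> (\<lambda>n. f (gns_repr u n))"

end

theory Submission
  imports Defs
begin


lemma scaleC_zero_left[simp]: "scaleC 0 (x::'a::cstar_algebra) = 0"
  using scaleC_of_real[of 0 x] by simp

lemma scaleC_minus1[simp]: "scaleC (-1) (x::'a::cstar_algebra) = -x"
  using scaleC_of_real[of "-1" x] by simp

lemma scaleC_zero_right[simp]: "scaleC c (0::'a::cstar_algebra) = 0"
  using scaleC_add_right[of c 0 0] by simp

lemma scaleC_minus_right[simp]: "scaleC c (-x::'a::cstar_algebra) = - scaleC c x"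
proof -
  have "scaleC c (-x) = scaleC c (scaleC (-1) x)" by (simp only: scaleC_minus1)
  also have "\<dots> = scaleC (-1) (scaleC c x)" by (simp only: scaleC_scaleC mult.commute)
  finally show ?thesis by (simp only: scaleC_minus1)
qed

lemma scaleC_diff_right: "scaleC c (x - y::'a::cstar_algebra) = scaleC c x - scaleC c y"
  using scaleC_add_right[of c x "-y"] by simp

lemma cstar_zero[simp]: "cstar (0::'a::cstar_algebra) = 0"
  using cstar_add[of "0::'a" 0] by simp

lemma cstar_minus[simp]: "cstar (-x::'a::cstar_algebra) = - cstar x"
  using cstar_add[of x "-x"] by (simp add: eq_neg_iff_add_eq_0 add.commute)

lemma cstar_diff: "cstar (x - y::'a::cstar_algebra) = cstar x - cstar y"
  using cstar_add[of x "-y"] by simp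

lemma cstar_one[simp]: "cstar (1::'a::cstar_algebra) = 1"
proof -
  have "cstar (1::'a) = cstar 1 * cstar (cstar 1)" by (simp add: cstar_cstar)
  also have "\<dots> = cstar (cstar 1 * 1)" by (simp only: cstar_mult)
  also have "\<dots> = 1" by (simp add: cstar_cstar)
  finally show ?thesis .
qed




lemma cs_aux:
  fixes A C :: real and B :: complex
  assumes h: "\<And>c. 0 \<le> A - 2 * Re (c * B) + (cmod c)^2 * C" and C0: "0 \<le> C"
  shows "(cmod B)^2 \<le> A * C"
proof (cases "C = 0")
  case True
  show ?thesis
  proof (rule ccontr)
    assume "\<not> ?thesis"
    hence Bn: "B \<noteq> 0" using True by auto
    have nb: "(cmod B)^2 > 0" using Bn by simp
    define t where "t = (\<bar>A\<bar> + 1) / (2 * (cmod B)^2)"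
    have "cnj B * B = complex_of_real ((cmod B)^2)" using complex_norm_square[of B] by (simp add: mult.commute)
    hence "Re ((of_real t * cnj B) * B) = t * (cmod B)^2"
      by (metis Re_complex_of_real mult.assoc of_real_mult)
    moreover have "0 \<le> A - 2 * Re ((of_real t * cnj B) * B)" using h[of "of_real t * cnj B"] True by simp
    ultimately have "0 \<le> A - 2 * t * (cmod B)^2" by simp
    moreover have "2 * t * (cmod B)^2 = \<bar>A\<bar> + 1" unfolding t_def using nb by (simp add: field_simps)
    ultimately show False by linarith
  qed
next
  case False
  hence Cp: "C > 0" using C0 by simp
  define c where "c = cnj B / of_real C"
  have "c * B = of_real ((cmod B)^2 / C)"
    unfolding c_def using complex_norm_square[of B] by (simp add: mult.commute)
  hence "Re (c * B) = (cmod B)^2 / C" by simp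
  moreover have "cmod c = cmod B / C" unfolding c_def using Cp by (simp add: norm_divide)
  ultimately have "0 \<le> A - 2 * ((cmod B)^2 / C) + (cmod B / C)^2 * C" using h[of c] by simp
  also have "\<dots> = A - (cmod B)^2 / C" using Cp by (simp add: field_simps power2_eq_square)
  finally have "(cmod B)^2 / C \<le> A" by simp
  thus ?thesis using Cp by (simp add: field_simps)
qed

locale st =
  fixes \<omega> :: "'a::cstar_algebra \<Rightarrow> complex"
  assumes st: "is_state \<omega>"
begin

lemma w_add[simp]: "\<omega> (x + y) = \<omega> x + \<omega> y" using st by (simp add: is_state_def)
lemma w_scl[simp]: "\<omega> (scaleC c x) = c * \<omega> x" using st by (simp add: is_state_def)
lemma w_one[simp]: "\<omega> 1 = 1" using st by (simp add: is_state_def)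
lemma w_zero[simp]: "\<omega> 0 = 0" using w_add[of 0 0] by simp
lemma w_minus[simp]: "\<omega> (- x) = - \<omega> x" using w_add[of x "-x"] by (simp add: eq_neg_iff_add_eq_0 add.commute)
lemma w_diff[simp]: "\<omega> (x - y) = \<omega> x - \<omega> y" using w_add[of x "-y"] by simp
lemma w_pos: "Im (\<omega> (cstar a * a)) = 0" "0 \<le> Re (\<omega> (cstar a * a))"
  using st by (auto simp: is_state_def)
lemma w_bnd: "\<exists>K\<ge>0. \<forall>x. cmod (\<omega> x) \<le> K * norm x"
proof -
  obtain K where K: "\<forall>x. cmod (\<omega> x) \<le> K * norm x" using st by (auto simp: is_state_def)
  have "1 \<le> K" using K[rule_format, of 1] by simp
  thus ?thesis using K by (intro exI[of _ K]) auto
qed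

definition psi where "psi x y = \<omega> (cstar x * y)"

lemma psi_add_right[simp]: "psi x (y + z) = psi x y + psi x z"
  by (simp add: psi_def distrib_left)
lemma psi_add_left[simp]: "psi (x + y) z = psi x z + psi y z"
  by (simp add: psi_def cstar_add distrib_right)
lemma psi_minus_right[simp]: "psi x (- y) = - psi x y" by (simp add: psi_def)
lemma psi_minus_left[simp]: "psi (- x) y = - psi x y" by (simp add: psi_def)
lemma psi_diff_right[simp]: "psi x (y - z) = psi x y - psi x z"
  by (simp add: psi_def right_diff_distrib)
lemma psi_diff_left[simp]: "psi (x - y) z = psi x z - psi y z"
  by (simp add: psi_def cstar_diff left_diff_distrib)
lemma psi_scl_right[simp]: "psi x (scaleC c y) = c * psi x y"
  by (simp add: psi_def mult_scaleC_right)
lemma psi_scl_left[simp]: "psi (scaleC c x) y = cnj c * psi x y"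
  by (simp add: psi_def cstar_scaleC mult_scaleC_left)
lemma psi_zero_right[simp]: "psi x 0 = 0" by (simp add: psi_def)
lemma psi_zero_left[simp]: "psi 0 x = 0" by (simp add: psi_def)

lemma psi_self_Im: "Im (psi x x) = 0" unfolding psi_def by (rule w_pos)
lemma psi_self_Re: "0 \<le> Re (psi x x)" unfolding psi_def by (rule w_pos)
lemma psi_self: "psi x x = complex_of_real (Re (psi x x))"
  using psi_self_Im by (simp add: complex_eq_iff)

lemma psi_cnj: "psi y x = cnj (psi x y)"
proof -
  have 1: "Im (psi (x + y) (x + y)) = 0" by (rule psi_self_Im)
  have 2: "Im (psi (x + scaleC \<i> y) (x + scaleC \<i> y)) = 0" by (rule psi_self_Im)
  from 1 have a: "Im (psi x y) + Im (psi y x) = 0" using psi_self_Im[of x] psi_self_Im[of y] by simp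
  from 2 have b: "Re (psi x y) - Re (psi y x) = 0" using psi_self_Im[of x] psi_self_Im[of y] by simp
  show ?thesis using a b by (simp add: complex_eq_iff)
qed

lemma w_cstar: "\<omega> (cstar z) = cnj (\<omega> z)"
  using psi_cnj[of 1 z] by (simp add: psi_def)

lemma psi_expand: "psi (x - scaleC c y) (x - scaleC c y)
   = psi x x - cnj c * cnj (psi x y) - c * psi x y + cnj c * c * psi y y"
  by (simp add: psi_cnj[of y x] algebra_simps)

lemma cs: "(cmod (psi x y))^2 \<le> Re (psi x x) * Re (psi y y)"
proof (rule cs_aux)
  fix c
  have "0 \<le> Re (psi (x - scaleC c y) (x - scaleC c y))" by (rule psi_self_Re)
  also have "\<dots> = Re (psi x x) - 2 * Re (c * psi x y) + (cmod c)^2 * Re (psi y y)"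
  proof -
    have e: "cnj c * c = complex_of_real ((cmod c)^2)" using complex_norm_square[of c] by (simp add: mult.commute)
    have "Re (cnj c * cnj (psi x y)) = Re (c * psi x y)"
      by (metis complex_cnj_mult cnj.simps(1))
    moreover have "Re (cnj c * c * psi y y) = (cmod c)^2 * Re (psi y y)"
      using e psi_self_Im[of y] by simp
    ultimately show ?thesis unfolding psi_expand by simp
  qed
  finally show "0 \<le> Re (psi x x) - 2 * Re (c * psi x y) + (cmod c)^2 * Re (psi y y)" .
qed (rule psi_self_Re)

end



context st begin

abbreviation sn where "sn \<equiv> gns_sn \<omega>"

lemma sn_eq: "sn x = sqrt (Re (psi x x))" by (simp add: gns_sn_def psi_def)
lemma sn_nonneg[simp]: "0 \<le> sn x" by (simp add: sn_eq psi_self_Re)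
lemma sn_sq: "(sn x)^2 = Re (psi x x)" by (simp add: sn_eq psi_self_Re)
lemma sn_zero[simp]: "sn 0 = 0" by (simp add: sn_eq)

lemma psi_bound: "cmod (psi x y) \<le> sn x * sn y"
proof -
  have "(cmod (psi x y))^2 \<le> (sn x * sn y)^2"
    using cs[of x y] by (simp add: power_mult_distrib sn_sq)
  thus ?thesis by (rule power2_le_imp_le) simp
qed

lemma Re_psi_bound: "Re (psi x y) \<le> sn x * sn y"
  using psi_bound[of x y] complex_Re_le_cmod[of "psi x y"] by linarith

lemma sn_triangle: "sn (x + y) \<le> sn x + sn y"
proof -
  have "Re (psi (x + y) (x + y)) = Re (psi x x) + Re (psi y y) + 2 * Re (psi x y)"
    using psi_cnj[of y x] by simp
  also have "\<dots> \<le> (sn x)^2 + (sn y)^2 + 2 * (sn x * sn y)"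
    using Re_psi_bound[of x y] by (simp add: sn_sq)
  also have "\<dots> = (sn x + sn y)^2" by (simp add: power2_eq_square algebra_simps)
  finally show ?thesis unfolding sn_eq[of "x+y"] by (intro real_le_lsqrt) (auto simp: sn_eq psi_self_Re)
qed

lemma sn_minus[simp]: "sn (- x) = sn x" by (simp add: sn_eq)

lemma sn_scl: "sn (scaleC c x) = cmod c * sn x"
proof -
  have "Re (psi (scaleC c x) (scaleC c x)) = (cmod c)^2 * Re (psi x x)"
  proof -
    have "cnj c * c = complex_of_real ((cmod c)^2)" using complex_norm_square[of c] by (simp add: mult.commute)
    have "psi (scaleC c x) (scaleC c x) = (cnj c * c) * psi x x" by (simp add: mult.assoc)
    hence "psi (scaleC c x) (scaleC c x) = complex_of_real ((cmod c)^2) * psi x x" unfolding \<open>cnj c * c = _\<close> .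
    thus ?thesis by (simp only: scaleR_conv_of_real[symmetric] scaleR_complex.sel(1))
  qed
  thus ?thesis by (simp add: sn_eq real_sqrt_mult)
qed

lemma sn_commute: "sn (x - y) = sn (y - x)"
  using sn_minus[of "x - y"] by simp

lemma sn_diff_triangle: "sn (x - z) \<le> sn (x - y) + sn (y - z)"
  using sn_triangle[of "x - y" "y - z"] by simp

lemma sn_diff_le: "\<bar>sn x - sn y\<bar> \<le> sn (x - y)"
  using sn_triangle[of "x - y" y] sn_triangle[of "y - x" x] sn_commute[of x y] by auto

lemma sn_diff_bound: "sn (x - y) \<le> sn x + sn y"
  using sn_triangle[of x "-y"] by simp

end



lemma cstar_power_sa:
  fixes h :: "'a::cstar_algebra"
  assumes "cstar h = h" shows "cstar (h ^ k) = h ^ k"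
proof (induction k)
  case 0 show ?case by simp
next
  case (Suc k)
  have "cstar (h ^ Suc k) = cstar (h * h ^ k)" by simp
  also have "\<dots> = h ^ k * h" using Suc assms by (simp add: cstar_mult)
  also have "\<dots> = h ^ Suc k" by (simp add: power_commutes)
  finally show ?case .
qed

lemma growth_contra:
  fixes c :: "nat \<Rightarrow> real"
  assumes s: "0 \<le> s" and M: "0 \<le> M"
    and rec: "\<And>n. (c n)^2 \<le> s * c (Suc n)"
    and up: "\<And>n. c n \<le> C0 * M ^ (2^n)"
  shows "c 0 \<le> s * M"
proof (rule ccontr)
  assume "\<not> ?thesis"
  hence gt: "c 0 > s * M" by simp
  have sp: "s > 0"
  proof (rule ccontr)
    assume "\<not> s > 0" hence "s = 0" using s by simp
    hence "(c 0)^2 \<le> 0" using rec[of 0] by simp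
    hence "c 0 = 0" by simp
    thus False using gt \<open>s = 0\<close> by simp
  qed
  have Mp: "M > 0"
  proof (rule ccontr)
    assume "\<not> M > 0" hence "M = 0" using M by simp
    hence "c 0 \<le> 0" using up[of 0] by simp
    thus False using gt \<open>M = 0\<close> by simp
  qed
  define r where "r = c 0 / (s * M)"
  have r1: "r > 1" unfolding r_def using gt sp Mp by (simp add: field_simps)
  have low: "c n \<ge> s * M ^ (2^n) * r ^ (2^n)" for n
  proof (induction n)
    case 0 show ?case unfolding r_def using sp Mp by simp
  next
    case (Suc n)
    have nn: "0 \<le> s * M ^ (2^n) * r ^ (2^n)" using sp Mp r1 by simp
    have "(s * M ^ (2^n) * r ^ (2^n))^2 \<le> (c n)^2"
      using Suc nn by (rule power_mono)
    also have "\<dots> \<le> s * c (Suc n)" by (rule rec)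
    finally have "s * (s * M ^ (2^Suc n) * r ^ (2^Suc n)) \<le> s * c (Suc n)"
      by (simp add: power_mult_distrib mult_2 power_add power2_eq_square mult_ac)
    thus ?case using sp by simp
  qed
  obtain n where n: "C0 / s < r ^ n" using real_arch_pow[OF r1] by blast
  have "r ^ n \<le> r ^ (2^n)" by (rule power_increasing) (use r1 less_exp[of n] in auto)
  hence "C0 / s < r ^ (2^n)" using n by simp
  hence "C0 < s * r ^ (2^n)" using sp by (simp add: field_simps)
  hence "C0 * M ^ (2^n) < s * M ^ (2^n) * r ^ (2^n)" using Mp by simp
  thus False using low[of n] up[of n] by simp
qed

context st begin

lemma psi_mult_bound: "Re (psi (a * b) (a * b)) \<le> norm (cstar a) * norm a * Re (psi b b)"
proof -
  define h where "h = cstar a * a"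
  have hsa: "cstar h = h" unfolding h_def by (simp add: cstar_mult cstar_cstar)
  define c where "c n = cmod (psi b (h ^ (2^n) * b))" for n
  define s where "s = Re (psi b b)"
  obtain K where K: "K \<ge> 0" "\<forall>x. cmod (\<omega> x) \<le> K * norm x" using w_bnd by blast
  have sq: "psi (h ^ k * b) (h ^ k * b) = psi b (h ^ (2*k) * b)" for k
    by (simp add: psi_def cstar_mult cstar_power_sa[OF hsa] mult.assoc power_add mult_2)
  have rec: "(c n)^2 \<le> s * c (Suc n)" for n
  proof -
    have "(c n)^2 \<le> Re (psi b b) * Re (psi (h ^ (2^n) * b) (h ^ (2^n) * b))"
      unfolding c_def by (rule cs)
    also have "Re (psi (h ^ (2^n) * b) (h ^ (2^n) * b)) = Re (psi b (h ^ (2^Suc n) * b))"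
      using sq[of "2^n"] by simp
    also have "\<dots> \<le> c (Suc n)" unfolding c_def by (rule complex_Re_le_cmod)
    finally show ?thesis unfolding s_def using psi_self_Re[of b]
      by (meson mult_left_mono order_trans order_refl)
  qed
  have up: "c n \<le> (K * norm (cstar b) * norm b) * (norm h) ^ (2^n)" for n
  proof -
    have 1: "c n \<le> K * norm (cstar b * (h ^ (2^n) * b))" unfolding c_def psi_def using K by blast
    have "norm (cstar b * (h ^ (2^n) * b)) \<le> norm (cstar b) * (norm (h ^ (2^n)) * norm b)"
      by (meson norm_mult_ineq mult_left_mono norm_ge_zero order_trans)
    also have "\<dots> \<le> norm (cstar b) * ((norm h) ^ (2^n) * norm b)"
      by (intro mult_left_mono mult_right_mono norm_power_ineq) auto
    finally have "K * norm (cstar b * (h ^ (2^n) * b)) \<le> K * (norm (cstar b) * ((norm h) ^ (2^n) * norm b))"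
      using K(1) by (rule mult_left_mono)
    with 1 show ?thesis by (simp add: mult_ac)
  qed
  have "c 0 \<le> s * norm h"
    by (rule growth_contra[OF _ _ rec up]) (auto simp: s_def psi_self_Re)
  moreover have "Re (psi (a * b) (a * b)) \<le> c 0"
  proof -
    have "psi (a * b) (a * b) = psi b (h ^ (2^0) * b)"
      by (simp add: psi_def h_def cstar_mult mult.assoc)
    thus ?thesis unfolding c_def by (simp add: complex_Re_le_cmod)
  qed
  moreover have "s * norm h \<le> norm (cstar a) * norm a * s"
    using psi_self_Re[of b] norm_mult_ineq[of "cstar a" a] unfolding h_def s_def
    by (simp add: mult.commute mult_left_mono)
  ultimately show ?thesis unfolding s_def by linarith
qed

definition Kop where "Kop a = sqrt (norm (cstar a) * norm a)"

lemma sn_mult: "sn (a * b) \<le> Kop a * sn b"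
proof -
  have "sn (a * b) \<le> sqrt (norm (cstar a) * norm a * Re (psi b b))"
    unfolding sn_eq by (rule real_sqrt_le_mono[OF psi_mult_bound])
  thus ?thesis by (simp add: Kop_def sn_eq real_sqrt_mult)
qed

lemma Kop_nonneg[simp]: "0 \<le> Kop a" by (simp add: Kop_def)

end



lemma gsn_nonneg: "is_state \<omega> \<Longrightarrow> 0 \<le> gns_sn \<omega> x"
  using st.sn_nonneg[of \<omega>] by (simp add: st_def)

lemma cauchy_comb:
  assumes s1: "is_state \<omega>1" and s2: "is_state \<omega>2"
    and A: "0 \<le> A" and B: "0 \<le> B"
    and le: "\<And>m n. gns_sn \<omega>2 (Z m - Z n) \<le> A * gns_sn \<omega>1 (X m - X n) + B * gns_sn \<omega>1 (Y m - Y n)"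
    and X: "gns_cauchy \<omega>1 X" and Y: "gns_cauchy \<omega>1 Y"
  shows "gns_cauchy \<omega>2 Z"
  unfolding gns_cauchy_def
proof (intro allI impI)
  fix e :: real assume e: "e > 0"
  define e' where "e' = e / (A + B + 1)"
  have e': "e' > 0" unfolding e'_def using e A B by simp
  obtain N1 where N1: "\<forall>m\<ge>N1. \<forall>n\<ge>N1. gns_sn \<omega>1 (X m - X n) < e'" using X e' unfolding gns_cauchy_def by blast
  obtain N2 where N2: "\<forall>m\<ge>N2. \<forall>n\<ge>N2. gns_sn \<omega>1 (Y m - Y n) < e'" using Y e' unfolding gns_cauchy_def by blast
  have "\<forall>m\<ge>max N1 N2. \<forall>n\<ge>max N1 N2. gns_sn \<omega>2 (Z m - Z n) < e"
  proof (intro allI impI)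
    fix m n assume "m \<ge> max N1 N2" "n \<ge> max N1 N2"
    hence a: "gns_sn \<omega>1 (X m - X n) < e'" "gns_sn \<omega>1 (Y m - Y n) < e'" using N1 N2 by auto
    have "A * gns_sn \<omega>1 (X m - X n) \<le> A * e'" using a A by (simp add: mult_left_mono)
    moreover have "B * gns_sn \<omega>1 (Y m - Y n) \<le> B * e'" using a B by (simp add: mult_left_mono)
    moreover have "A * e' + B * e' < e"
    proof -
      have d: "A + B + 1 > 0" using A B by simp
      have "A * e' + B * e' = (A + B) * e'" by (simp add: distrib_right)
      also have "\<dots> < e" unfolding e'_def using d e A B by (simp add: field_simps)
      finally show ?thesis .
    qed
    ultimately show "gns_sn \<omega>2 (Z m - Z n) < e" using le[of m n] by linarith
  qed
  thus "\<exists>N. \<forall>m\<ge>N. \<forall>n\<ge>N. gns_sn \<omega>2 (Z m - Z n) < e" by blast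
qed

lemma equiv_comb:
  assumes s1: "is_state \<omega>1" and s2: "is_state \<omega>2"
    and A: "0 \<le> A" and B: "0 \<le> B"
    and le: "\<And>n. gns_sn \<omega>2 (Z n - Z' n) \<le> A * gns_sn \<omega>1 (X n - X' n) + B * gns_sn \<omega>1 (Y n - Y' n)"
    and X: "gns_equiv \<omega>1 X X'" and Y: "gns_equiv \<omega>1 Y Y'"
  shows "gns_equiv \<omega>2 Z Z'"
  unfolding gns_equiv_def
proof (rule tendsto_sandwich[where f="\<lambda>n. 0" and h="\<lambda>n. A * gns_sn \<omega>1 (X n - X' n) + B * gns_sn \<omega>1 (Y n - Y' n)"])
  show "\<forall>\<^sub>F n in sequentially. 0 \<le> gns_sn \<omega>2 (Z n - Z' n)" using gsn_nonneg[OF s2] by simp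
  show "\<forall>\<^sub>F n in sequentially. gns_sn \<omega>2 (Z n - Z' n) \<le> A * gns_sn \<omega>1 (X n - X' n) + B * gns_sn \<omega>1 (Y n - Y' n)"
    using le by simp
  show "(\<lambda>n. A * gns_sn \<omega>1 (X n - X' n) + B * gns_sn \<omega>1 (Y n - Y' n)) \<longlonglongrightarrow> 0"
    using tendsto_add[OF tendsto_mult_left[OF X[unfolded gns_equiv_def], of A] tendsto_mult_left[OF Y[unfolded gns_equiv_def], of B]] by simp
qed simp

context st begin

abbreviation "cauchy \<equiv> gns_cauchy \<omega>"
abbreviation "eqv \<equiv> gns_equiv \<omega>"
abbreviation "cls \<equiv> gns_cls \<omega>"
abbreviation "H \<equiv> GNS_space \<omega>"

lemma eqv_refl: "eqv X X" by (simp add: gns_equiv_def)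
lemma eqv_sym: "eqv X Y \<Longrightarrow> eqv Y X" unfolding gns_equiv_def using sn_commute by simp
lemma eqv_trans: "eqv P Q \<Longrightarrow> eqv Q R \<Longrightarrow> eqv P R"
  by (rule equiv_comb[OF st st, where A=1 and B=1 and X=P and X'=Q and Y=Q and Y'=R]) (auto simp: sn_diff_triangle)

lemma cauchy_eqv: "cauchy X \<Longrightarrow> eqv X Y \<Longrightarrow> cauchy Y"
  unfolding gns_cauchy_def
proof (intro allI impI)
  fix e :: real assume c: "\<forall>e>0. \<exists>N. \<forall>m\<ge>N. \<forall>n\<ge>N. sn (X m - X n) < e" and q: "eqv X Y" and e: "e > 0"
  obtain N1 where N1: "\<forall>m\<ge>N1. \<forall>n\<ge>N1. sn (X m - X n) < e/3" using c e by (meson divide_pos_pos zero_less_numeral)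
  have e3: "e/3 > 0" using e by simp
  have "\<forall>\<epsilon>>0. \<forall>\<^sub>F n in sequentially. dist (sn (X n - Y n)) 0 < \<epsilon>"
    using q unfolding gns_equiv_def tendsto_iff .
  hence "\<forall>\<^sub>F n in sequentially. dist (sn (X n - Y n)) 0 < e/3" using e3 by blast
  then obtain N2 where N2: "\<forall>n\<ge>N2. sn (X n - Y n) < e/3" by (auto simp: eventually_sequentially)
  have "\<forall>m\<ge>max N1 N2. \<forall>n\<ge>max N1 N2. sn (Y m - Y n) < e"
  proof (intro allI impI)
    fix m n assume mn: "m \<ge> max N1 N2" "n \<ge> max N1 N2"
    have "sn (Y m - Y n) \<le> sn (Y m - X m) + sn (X m - Y n)" by (rule sn_diff_triangle)
    also have "sn (X m - Y n) \<le> sn (X m - X n) + sn (X n - Y n)" by (rule sn_diff_triangle)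
    finally have "sn (Y m - Y n) \<le> sn (X m - Y m) + (sn (X m - X n) + sn (X n - Y n))"
      using sn_commute[of "Y m"] by simp
    moreover have "sn (X m - Y m) < e/3" "sn (X n - Y n) < e/3" "sn (X m - X n) < e/3"
      using N1 N2 mn by auto
    ultimately show "sn (Y m - Y n) < e" by linarith
  qed
  thus "\<exists>N. \<forall>m\<ge>N. \<forall>n\<ge>N. sn (Y m - Y n) < e" by blast
qed

lemma cls_mem: "cauchy X \<Longrightarrow> X \<in> cls X" by (simp add: gns_cls_def eqv_refl)

lemma cls_eqI: "eqv X Y \<Longrightarrow> cls X = cls Y"
  unfolding gns_cls_def using eqv_trans eqv_sym by blast

lemma cls_eq_iff: assumes "cauchy Y" shows "cls X = cls Y \<longleftrightarrow> eqv X Y"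
proof
  assume "cls X = cls Y"
  hence "Y \<in> cls X" using cls_mem[OF assms] by simp
  thus "eqv X Y" by (simp add: gns_cls_def)
qed (rule cls_eqI)

lemma carrier_iff: "u \<in> hcarrier H \<longleftrightarrow> (\<exists>X. cauchy X \<and> u = cls X)"
  by (auto simp: GNS_space_def)

lemma repr_cls: assumes "cauchy X" shows "cauchy (gns_repr (cls X))" "eqv X (gns_repr (cls X))"
proof -
  have "gns_repr (cls X) \<in> cls X" unfolding gns_repr_def by (rule someI[of _ X]) (rule cls_mem[OF assms])
  thus "cauchy (gns_repr (cls X))" "eqv X (gns_repr (cls X))" by (auto simp: gns_cls_def)
qed

lemma cls_repr: "cauchy X \<Longrightarrow> cls (gns_repr (cls X)) = cls X"
  using repr_cls cls_eqI eqv_sym by metis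

lemma cauchy_bounded: assumes "cauchy X" shows "\<exists>B\<ge>0. \<forall>n. sn (X n) \<le> B"
proof -
  obtain N where N: "\<forall>m\<ge>N. \<forall>n\<ge>N. sn (X m - X n) < 1" using assms unfolding gns_cauchy_def
    by (meson zero_less_one)
  define B where "B = (\<Sum>i\<le>N. sn (X i)) + 1"
  have S: "sn (X i) \<le> (\<Sum>i\<le>N. sn (X i))" if "i \<le> N" for i
    using that by (intro member_le_sum) auto
  have "sn (X n) \<le> B" for n
  proof (cases "n \<le> N")
    case True thus ?thesis using S[of n] by (simp add: B_def)
  next
    case False
    have "sn (X n) \<le> sn (X n - X N) + sn (X N)" using sn_triangle[of "X n - X N" "X N"] by simp
    also have "\<dots> \<le> 1 + (\<Sum>i\<le>N. sn (X i))"
    proof -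
      have "sn (X n - X N) < 1" using N False by simp
      thus ?thesis using S[of N] by simp
    qed
    finally show ?thesis by (simp add: B_def)
  qed
  moreover have "0 \<le> B" unfolding B_def by (simp add: sum_nonneg)
  ultimately show ?thesis by blast
qed

lemma psi_conv: assumes X: "cauchy X" and Y: "cauchy Y"
  shows "convergent (\<lambda>n. psi (X n) (Y n))"
proof -
  obtain BX where BX: "BX \<ge> 0" "\<forall>n. sn (X n) \<le> BX" using cauchy_bounded[OF X] by blast
  obtain BY where BY: "BY \<ge> 0" "\<forall>n. sn (Y n) \<le> BY" using cauchy_bounded[OF Y] by blast
  have le: "cmod (psi (X m) (Y m) - psi (X n) (Y n)) \<le> BY * sn (X m - X n) + BX * sn (Y m - Y n)" for m n
  proof -
    have "psi (X m) (Y m) - psi (X n) (Y n) = psi (X m - X n) (Y m) + psi (X n) (Y m - Y n)" by simp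
    hence "cmod (psi (X m) (Y m) - psi (X n) (Y n)) \<le> cmod (psi (X m - X n) (Y m)) + cmod (psi (X n) (Y m - Y n))"
      by (metis norm_triangle_ineq)
    also have "\<dots> \<le> sn (X m - X n) * sn (Y m) + sn (X n) * sn (Y m - Y n)"
      by (intro add_mono psi_bound)
    also have "\<dots> \<le> sn (X m - X n) * BY + BX * sn (Y m - Y n)"
      using BX BY by (intro add_mono mult_left_mono mult_right_mono) auto
    finally show ?thesis by (simp add: mult.commute)
  qed
  have "Cauchy (\<lambda>n. psi (X n) (Y n))"
  proof (rule CauchyI)
    fix e :: real assume e: "e > 0"
    define e' where "e' = e / (BX + BY + 1)"
    have e': "e' > 0" unfolding e'_def using e BX BY by simp
    obtain N1 where N1: "\<forall>m\<ge>N1. \<forall>n\<ge>N1. sn (X m - X n) < e'" using X e' unfolding gns_cauchy_def by blast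
    obtain N2 where N2: "\<forall>m\<ge>N2. \<forall>n\<ge>N2. sn (Y m - Y n) < e'" using Y e' unfolding gns_cauchy_def by blast
    have "\<forall>m\<ge>max N1 N2. \<forall>n\<ge>max N1 N2. cmod (psi (X m) (Y m) - psi (X n) (Y n)) < e"
    proof (intro allI impI)
      fix m n assume "m \<ge> max N1 N2" "n \<ge> max N1 N2"
      hence a: "sn (X m - X n) < e'" "sn (Y m - Y n) < e'" using N1 N2 by auto
      have "BY * sn (X m - X n) \<le> BY * e'" using a BY by (simp add: mult_left_mono)
      moreover have "BX * sn (Y m - Y n) \<le> BX * e'" using a BX by (simp add: mult_left_mono)
      moreover have "BY * e' + BX * e' < e"
      proof -
        have d: "BX + BY + 1 > 0" using BX BY by simp
        have "BY * e' + BX * e' = (BX + BY) * e'" by (simp add: distrib_right)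
        also have "\<dots> < e" unfolding e'_def using d e BX BY by (simp add: field_simps)
        finally show ?thesis .
      qed
      ultimately show "cmod (psi (X m) (Y m) - psi (X n) (Y n)) < e" using le[of m n] by linarith
    qed
    thus "\<exists>M. \<forall>m\<ge>M. \<forall>n\<ge>M. cmod (psi (X m) (Y m) - psi (X n) (Y n)) < e" by blast
  qed
  thus ?thesis by (simp add: Cauchy_convergent_iff)
qed

lemma psi_eqv: assumes X: "cauchy X" and Y: "cauchy Y" and X': "cauchy X'" and Y': "cauchy Y'"
  and q: "eqv X X'" "eqv Y Y'"
  shows "(\<lambda>n. psi (X n) (Y n) - psi (X' n) (Y' n)) \<longlonglongrightarrow> 0"
proof -
  obtain BX where BX: "BX \<ge> 0" "\<forall>n. sn (X' n) \<le> BX" using cauchy_bounded[OF X'] by blast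
  obtain BY where BY: "BY \<ge> 0" "\<forall>n. sn (Y n) \<le> BY" using cauchy_bounded[OF Y] by blast
  have le: "cmod (psi (X n) (Y n) - psi (X' n) (Y' n)) \<le> BY * sn (X n - X' n) + BX * sn (Y n - Y' n)" for n
  proof -
    have "psi (X n) (Y n) - psi (X' n) (Y' n) = psi (X n - X' n) (Y n) + psi (X' n) (Y n - Y' n)" by simp
    hence "cmod (psi (X n) (Y n) - psi (X' n) (Y' n)) \<le> cmod (psi (X n - X' n) (Y n)) + cmod (psi (X' n) (Y n - Y' n))"
      by (metis norm_triangle_ineq)
    also have "\<dots> \<le> sn (X n - X' n) * sn (Y n) + sn (X' n) * sn (Y n - Y' n)"
      by (intro add_mono psi_bound)
    also have "\<dots> \<le> sn (X n - X' n) * BY + BX * sn (Y n - Y' n)"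
      using BX BY by (intro add_mono mult_left_mono mult_right_mono) auto
    finally show ?thesis by (simp add: mult.commute)
  qed
  have "(\<lambda>n. BY * sn (X n - X' n) + BX * sn (Y n - Y' n)) \<longlonglongrightarrow> 0"
    using tendsto_add[OF tendsto_mult_left[OF q(1)[unfolded gns_equiv_def], of BY] tendsto_mult_left[OF q(2)[unfolded gns_equiv_def], of BX]] by simp
  thus ?thesis
    by (rule tendsto_0_le[where K=1]) (use le in \<open>auto intro!: always_eventually order_trans[OF _ abs_ge_self]\<close>)
qed

definition ip where "ip X Y = lim (\<lambda>n. psi (X n) (Y n))"

lemma ip_lim: "cauchy X \<Longrightarrow> cauchy Y \<Longrightarrow> (\<lambda>n. psi (X n) (Y n)) \<longlonglongrightarrow> ip X Y"
  unfolding ip_def using psi_conv convergent_LIMSEQ_iff by blast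

lemma ip_eqv: "cauchy X \<Longrightarrow> cauchy Y \<Longrightarrow> cauchy X' \<Longrightarrow> cauchy Y' \<Longrightarrow> eqv X X' \<Longrightarrow> eqv Y Y'
   \<Longrightarrow> ip X Y = ip X' Y'"
proof -
  assume a: "cauchy X" "cauchy Y" "cauchy X'" "cauchy Y'" "eqv X X'" "eqv Y Y'"
  have "(\<lambda>n. psi (X n) (Y n)) \<longlonglongrightarrow> ip X' Y'"
    by (rule Lim_transform[OF ip_lim[OF a(3,4)] psi_eqv[OF a]])
  thus ?thesis using ip_lim[OF a(1,2)] LIMSEQ_unique by blast
qed

lemma hinner_cls: assumes "cauchy X" "cauchy Y"
  shows "hinner H (cls X) (cls Y) = ip X Y"
proof -
  have "hinner H (cls X) (cls Y) = ip (gns_repr (cls X)) (gns_repr (cls Y))"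
    by (simp add: GNS_space_def ip_def psi_def)
  also have "\<dots> = ip X Y" using repr_cls[OF assms(1)] repr_cls[OF assms(2)] assms
    by (intro ip_eqv[symmetric]) auto
  finally show ?thesis .
qed

lemma sn_add_diff: "sn ((a + b) - (c + d)) \<le> sn (a - c) + sn (b - d)"
proof -
  have e: "(a + b) - (c + d) = (a - c) + (b - d)" by (simp add: algebra_simps)
  show ?thesis unfolding e by (rule sn_triangle)
qed

lemma hadd_cls: assumes "cauchy X" "cauchy Y"
  shows "hadd H (cls X) (cls Y) = cls (\<lambda>n. X n + Y n)"
proof -
  have "eqv (\<lambda>n. X n + Y n) (\<lambda>n. gns_repr (cls X) n + gns_repr (cls Y) n)"
    by (rule equiv_comb[OF st st, of 1 1 _ _ X _ Y]) (use repr_cls assms sn_add_diff in auto)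
  thus ?thesis by (simp add: GNS_space_def cls_eqI[symmetric])
qed

lemma cauchy_add: "cauchy X \<Longrightarrow> cauchy Y \<Longrightarrow> cauchy (\<lambda>n. X n + Y n)"
  by (rule cauchy_comb[OF st st, of 1 1 _ X Y]) (auto simp: sn_add_diff)

lemma hscale_cls: assumes "cauchy X"
  shows "hscale H c (cls X) = cls (\<lambda>n. scaleC c (X n))"
proof -
  have "eqv (\<lambda>n. scaleC c (X n)) (\<lambda>n. scaleC c (gns_repr (cls X) n))"
    by (rule equiv_comb[OF st st, of "cmod c" 0 _ _ X _ X X]) (use repr_cls assms in \<open>auto simp: sn_scl scaleC_diff_right[symmetric] eqv_refl\<close>)
  thus ?thesis by (simp add: GNS_space_def cls_eqI[symmetric])
qed

lemma cauchy_scl: "cauchy X \<Longrightarrow> cauchy (\<lambda>n. scaleC c (X n))"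
  by (rule cauchy_comb[OF st st, of "cmod c" 0 _ X X]) (auto simp: sn_scl scaleC_diff_right[symmetric])

lemma rep_cls: assumes "cauchy X"
  shows "GNS_rep \<omega> a (cls X) = cls (\<lambda>n. a * X n)"
proof -
  have "eqv (\<lambda>n. a * X n) (\<lambda>n. a * gns_repr (cls X) n)"
    by (rule equiv_comb[OF st st, of "Kop a" 0 _ _ X _ X X]) (use repr_cls assms sn_mult in \<open>auto simp: right_diff_distrib[symmetric] eqv_refl\<close>)
  thus ?thesis by (simp add: GNS_rep_def cls_eqI[symmetric])
qed

lemma cauchy_mult: "cauchy X \<Longrightarrow> cauchy (\<lambda>n. a * X n)"
  by (rule cauchy_comb[OF st st, of "Kop a" 0 _ X X]) (auto simp: right_diff_distrib[symmetric] sn_mult)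

lemma cauchy_const: "cauchy (\<lambda>n. x)" by (simp add: gns_cauchy_def)

end



context st begin

lemma hzero_eq: "hzero H = cls (\<lambda>n. 0)" by (simp add: GNS_space_def)

lemma hnorm_lim: assumes "cauchy X" shows "(\<lambda>n. sn (X n)) \<longlonglongrightarrow> hnorm H (cls X)"
proof -
  have "(\<lambda>n. sqrt (Re (psi (X n) (X n)))) \<longlonglongrightarrow> sqrt (Re (ip X X))"
    by (intro tendsto_real_sqrt tendsto_Re ip_lim assms)
  thus ?thesis by (simp add: hnorm_def hinner_cls[OF assms assms] sn_eq)
qed

lemma hdist_lim: assumes X: "cauchy X" and Y: "cauchy Y"
  shows "(\<lambda>n. sn (X n - Y n)) \<longlonglongrightarrow> hdist H (cls X) (cls Y)"
proof -
  have "hdist H (cls X) (cls Y) = hnorm H (cls (\<lambda>n. X n - Y n))"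
  proof -
    have m: "cauchy (\<lambda>n. - Y n)" using cauchy_scl[OF Y, of "-1"] by simp
    show ?thesis unfolding hdist_def using X Y by (simp add: hscale_cls hadd_cls[OF X m])
  qed
  moreover have "cauchy (\<lambda>n. X n - Y n)"
    using cauchy_add[OF X cauchy_scl[OF Y, of "-1"]] by simp
  ultimately show ?thesis using hnorm_lim by simp
qed

lemma hdist_nonneg: "cauchy X \<Longrightarrow> cauchy Y \<Longrightarrow> 0 \<le> hdist H (cls X) (cls Y)"
  by (rule LIMSEQ_le_const[OF hdist_lim]) auto

lemma hdist_sym: "cauchy X \<Longrightarrow> cauchy Y \<Longrightarrow> hdist H (cls X) (cls Y) = hdist H (cls Y) (cls X)"
proof -
  assume a: "cauchy X" "cauchy Y"
  have e: "(\<lambda>n. sn (X n - Y n)) = (\<lambda>n. sn (Y n - X n))" by (rule ext) (rule sn_commute)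
  show ?thesis using hdist_lim[OF a] hdist_lim[OF a(2,1)] unfolding e by (rule LIMSEQ_unique)
qed

lemma hdist_tri: "cauchy X \<Longrightarrow> cauchy Y \<Longrightarrow> cauchy Z \<Longrightarrow>
   hdist H (cls X) (cls Z) \<le> hdist H (cls X) (cls Y) + hdist H (cls Y) (cls Z)"
  by (rule LIMSEQ_le[OF hdist_lim tendsto_add[OF hdist_lim hdist_lim]]) (auto simp: sn_diff_triangle)

lemma hdist_const: "hdist H (cls (\<lambda>n. a)) (cls (\<lambda>n. b)) = sn (a - b)"
  using hdist_lim[OF cauchy_const cauchy_const, of a b] by (simp add: LIMSEQ_const_iff)

lemma allV: "(\<And>X. cauchy X \<Longrightarrow> P (cls X)) \<Longrightarrow> \<forall>x\<in>hcarrier H. P x"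
  using carrier_iff by auto

lemma clsV: "cauchy X \<Longrightarrow> cls X \<in> hcarrier H" using carrier_iff by auto

lemma complete:
  assumes U: "\<forall>n. U n \<in> hcarrier H"
    and C: "\<forall>e>0. \<exists>N. \<forall>m\<ge>N. \<forall>n\<ge>N. hdist H (U m) (U n) < e"
  shows "\<exists>x\<in>hcarrier H. (\<lambda>n. hdist H (U n) x) \<longlonglongrightarrow> 0"
proof -
  have "\<forall>k. \<exists>X. cauchy X \<and> U k = cls X" using U carrier_iff by blast
  then obtain S where S: "\<And>k. cauchy (S k)" "\<And>k. U k = cls (S k)" by metis
  have "\<forall>k. \<exists>N. \<forall>m\<ge>N. \<forall>n\<ge>N. sn (S k m - S k n) < 1 / Suc k"
    using S(1) unfolding gns_cauchy_def by simp
  then obtain N where N: "\<And>k m n. m \<ge> N k \<Longrightarrow> n \<ge> N k \<Longrightarrow> sn (S k m - S k n) < 1 / Suc k" by metis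
  define Z where "Z k = S k (N k)" for k
  have a: "hdist H (U k) (cls (\<lambda>n. Z k)) \<le> 1 / Suc k" for k
  proof -
    have "\<forall>n\<ge>N k. sn (S k n - Z k) \<le> 1 / Suc k"
      using N[of k _ "N k"] unfolding Z_def by (meson less_imp_le order_refl)
    thus ?thesis unfolding S(2) by (rule Lim_bounded[OF hdist_lim[OF S(1) cauchy_const]])
  qed
  have a': "hdist H (cls (\<lambda>n. Z k)) (U k) \<le> 1 / Suc k" for k
    using a[of k] hdist_sym[OF S(1) cauchy_const] S(2) by simp
  have ZC: "cauchy Z" unfolding gns_cauchy_def
  proof (intro allI impI)
    fix e :: real assume e: "e > 0"
    obtain M1 where M1: "\<forall>m\<ge>M1. \<forall>n\<ge>M1. hdist H (U m) (U n) < e/3" using C e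
      by (meson divide_pos_pos zero_less_numeral)
    have "\<exists>n. inverse (real (Suc n)) < e/3" using e by (intro reals_Archimedean) simp
    then obtain M2 where "inverse (real (Suc M2)) < e/3" by blast
    hence M2: "1 / real (Suc M2) < e/3" by (simp add: inverse_eq_divide)
    have "\<forall>j\<ge>max M1 M2. \<forall>k\<ge>max M1 M2. sn (Z j - Z k) < e"
    proof (intro allI impI)
      fix j k assume jk: "j \<ge> max M1 M2" "k \<ge> max M1 M2"
      have "sn (Z j - Z k) = hdist H (cls (\<lambda>n. Z j)) (cls (\<lambda>n. Z k))" by (simp add: hdist_const)
      also have "\<dots> \<le> hdist H (cls (\<lambda>n. Z j)) (U j) + hdist H (U j) (cls (\<lambda>n. Z k))"
        unfolding S(2) by (rule hdist_tri[OF cauchy_const S(1) cauchy_const])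
      also have "hdist H (U j) (cls (\<lambda>n. Z k)) \<le> hdist H (U j) (U k) + hdist H (U k) (cls (\<lambda>n. Z k))"
        unfolding S(2) by (rule hdist_tri[OF S(1) S(1) cauchy_const])
      finally have "sn (Z j - Z k) \<le> 1 / Suc j + hdist H (U j) (U k) + 1 / Suc k"
        using a[of k] a'[of j] by simp
      moreover have "1 / real (Suc j) \<le> 1 / Suc M2" "1 / real (Suc k) \<le> 1 / Suc M2"
        using jk by (auto simp: frac_le)
      moreover have "hdist H (U j) (U k) < e/3" using M1 jk by auto
      ultimately show "sn (Z j - Z k) < e" using M2 by linarith
    qed
    thus "\<exists>N. \<forall>m\<ge>N. \<forall>n\<ge>N. sn (Z m - Z n) < e" by blast
  qed
  have "(\<lambda>k. hdist H (U k) (cls Z)) \<longlonglongrightarrow> 0"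
  proof (rule metric_LIMSEQ_I)
    fix e :: real assume e: "e > 0"
    obtain M1 where M1: "\<forall>m\<ge>M1. \<forall>n\<ge>M1. sn (Z m - Z n) < e/3" using ZC e unfolding gns_cauchy_def
      by (meson divide_pos_pos zero_less_numeral)
    have "\<exists>n. inverse (real (Suc n)) < e/3" using e by (intro reals_Archimedean) simp
    then obtain M2 where "inverse (real (Suc M2)) < e/3" by blast
    hence M2: "1 / real (Suc M2) < e/3" by (simp add: inverse_eq_divide)
    have "\<forall>k\<ge>max M1 M2. dist (hdist H (U k) (cls Z)) 0 < e"
    proof (intro allI impI)
      fix k assume k: "k \<ge> max M1 M2"
      have "hdist H (cls (\<lambda>n. Z k)) (cls Z) \<le> e/3"
        by (rule Lim_bounded[OF hdist_lim[OF cauchy_const ZC], of M1]) (use M1 k in \<open>auto intro: less_imp_le\<close>)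
      moreover have "hdist H (U k) (cls Z) \<le> hdist H (U k) (cls (\<lambda>n. Z k)) + hdist H (cls (\<lambda>n. Z k)) (cls Z)"
        unfolding S(2) by (rule hdist_tri[OF S(1) cauchy_const ZC])
      moreover have "1 / real (Suc k) \<le> 1 / Suc M2" using k by (auto simp: frac_le)
      moreover have "0 \<le> hdist H (U k) (cls Z)" unfolding S(2) by (rule hdist_nonneg[OF S(1) ZC])
      ultimately show "dist (hdist H (U k) (cls Z)) 0 < e" using a[of k] M2 by simp
    qed
    thus "\<exists>no. \<forall>n\<ge>no. dist (hdist H (U n) (cls Z)) 0 < e" by blast
  qed
  thus ?thesis using clsV[OF ZC] by blast
qed

end



context st begin

lemma ip_add_right: "cauchy X \<Longrightarrow> cauchy Y \<Longrightarrow> cauchy Z \<Longrightarrow> ip X (\<lambda>n. Y n + Z n) = ip X Y + ip X Z"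
  using ip_lim[of X "\<lambda>n. Y n + Z n"] tendsto_add[OF ip_lim[of X Y] ip_lim[of X Z]] cauchy_add[of Y Z]
  by (simp add: LIMSEQ_unique)

lemma ip_scl_right: "cauchy X \<Longrightarrow> cauchy Y \<Longrightarrow> ip X (\<lambda>n. scaleC c (Y n)) = c * ip X Y"
  using ip_lim[of X "\<lambda>n. scaleC c (Y n)"] tendsto_mult_left[OF ip_lim[of X Y], of c] cauchy_scl[of Y c]
  by (simp add: LIMSEQ_unique)

lemma ip_cnj: "cauchy X \<Longrightarrow> cauchy Y \<Longrightarrow> ip Y X = cnj (ip X Y)"
proof -
  assume a: "cauchy X" "cauchy Y"
  have e: "(\<lambda>n. psi (Y n) (X n)) = (\<lambda>n. cnj (psi (X n) (Y n)))" by (rule ext) (rule psi_cnj)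
  show ?thesis using ip_lim[OF a(2,1)] tendsto_cnj[OF ip_lim[OF a]] unfolding e by (rule LIMSEQ_unique)
qed

lemma ip_pos: "cauchy X \<Longrightarrow> 0 \<le> Re (ip X X)"
  by (rule LIMSEQ_le_const[OF tendsto_Re[OF ip_lim]]) (auto simp: psi_self_Re)

lemma ip_zero: assumes X: "cauchy X" and z: "ip X X = 0" shows "cls X = cls (\<lambda>n. 0)"
proof -
  have "(\<lambda>n. sqrt (Re (psi (X n) (X n)))) \<longlonglongrightarrow> sqrt (Re (ip X X))"
    by (intro tendsto_real_sqrt tendsto_Re ip_lim X)
  hence "eqv X (\<lambda>n. 0)" using z by (simp add: gns_equiv_def sn_eq)
  thus ?thesis by (rule cls_eqI)
qed

lemma cauchy_neg: "cauchy X \<Longrightarrow> cauchy (\<lambda>n. - X n)"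
  using cauchy_scl[of X "-1"] by simp

lemma hilbert: "hilbert_space H"
  unfolding hilbert_space_def Let_def
proof (intro conjI)
  show "hzero H \<in> hcarrier H" by (simp add: hzero_eq clsV cauchy_const)
  show "\<forall>x\<in>hcarrier H. \<forall>y\<in>hcarrier H. hadd H x y \<in> hcarrier H"
    by (intro allV) (simp add: hadd_cls clsV cauchy_add)
  show "\<forall>c. \<forall>x\<in>hcarrier H. hscale H c x \<in> hcarrier H"
    by (intro allI allV) (simp add: hscale_cls clsV cauchy_scl)
  show "\<forall>x\<in>hcarrier H. \<forall>y\<in>hcarrier H. \<forall>z\<in>hcarrier H. hadd H (hadd H x y) z = hadd H x (hadd H y z)"
    by (intro allV) (simp add: hadd_cls cauchy_add add.assoc)
  show "\<forall>x\<in>hcarrier H. \<forall>y\<in>hcarrier H. hadd H x y = hadd H y x"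
    by (intro allV) (simp add: hadd_cls add.commute)
  show "\<forall>x\<in>hcarrier H. hadd H x (hzero H) = x"
    by (intro allV) (simp add: hzero_eq hadd_cls cauchy_const)
  show "\<forall>x\<in>hcarrier H. hadd H x (hscale H (- 1) x) = hzero H"
    by (intro allV) (simp add: hzero_eq hadd_cls hscale_cls cauchy_neg)
  show "\<forall>x\<in>hcarrier H. hscale H 1 x = x"
    by (intro allV) (simp add: hscale_cls scaleC_one)
  show "\<forall>a b. \<forall>x\<in>hcarrier H. hscale H a (hscale H b x) = hscale H (a * b) x"
    by (intro allI allV) (simp add: hscale_cls cauchy_scl scaleC_scaleC)
  show "\<forall>a b. \<forall>x\<in>hcarrier H. hscale H (a + b) x = hadd H (hscale H a x) (hscale H b x)"
    by (intro allI allV) (simp add: hscale_cls hadd_cls cauchy_scl scaleC_add_left)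
  show "\<forall>a. \<forall>x\<in>hcarrier H. \<forall>y\<in>hcarrier H. hscale H a (hadd H x y) = hadd H (hscale H a x) (hscale H a y)"
    by (intro allI allV) (simp add: hscale_cls hadd_cls cauchy_scl cauchy_add scaleC_add_right)
  show "\<forall>x\<in>hcarrier H. \<forall>y\<in>hcarrier H. \<forall>z\<in>hcarrier H. hinner H x (hadd H y z) = hinner H x y + hinner H x z"
    by (intro allV) (simp add: hadd_cls hinner_cls cauchy_add ip_add_right)
  show "\<forall>c. \<forall>x\<in>hcarrier H. \<forall>y\<in>hcarrier H. hinner H x (hscale H c y) = c * hinner H x y"
    by (intro allI allV) (simp add: hscale_cls hinner_cls cauchy_scl ip_scl_right)
  show "\<forall>x\<in>hcarrier H. \<forall>y\<in>hcarrier H. hinner H y x = cnj (hinner H x y)"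
    by (intro allV, simp add: hinner_cls, rule ip_cnj, assumption+)
  show "\<forall>x\<in>hcarrier H. 0 \<le> Re (hinner H x x)"
    by (intro allV) (simp add: hinner_cls ip_pos)
  show "\<forall>x\<in>hcarrier H. hinner H x x = 0 \<longrightarrow> x = hzero H"
    by (intro allV) (simp add: hinner_cls hzero_eq ip_zero)
  show "\<forall>X. (\<forall>n. X n \<in> hcarrier H) \<and> (\<forall>e>0. \<exists>N. \<forall>m\<ge>N. \<forall>n\<ge>N. hdist H (X m) (X n) < e) \<longrightarrow>
    (\<exists>x\<in>hcarrier H. (\<lambda>n. hdist H (X n) x) \<longlonglongrightarrow> 0)"
    using complete by blast
qed

lemma hnorm_cls_eq: "cauchy X \<Longrightarrow> hnorm H (cls X) = lim (\<lambda>n. sn (X n))"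
  using hnorm_lim limI by metis

lemma rep_bounded: "bounded_linear_op H H (GNS_rep \<omega> a)"
  unfolding bounded_linear_op_def
proof (intro conjI)
  show "\<forall>x\<in>hcarrier H. GNS_rep \<omega> a x \<in> hcarrier H"
    by (intro allV) (simp add: rep_cls clsV cauchy_mult)
  show "\<forall>x\<in>hcarrier H. \<forall>y\<in>hcarrier H. GNS_rep \<omega> a (hadd H x y) = hadd H (GNS_rep \<omega> a x) (GNS_rep \<omega> a y)"
    by (intro allV) (simp add: rep_cls hadd_cls cauchy_mult cauchy_add distrib_left)
  show "\<forall>c. \<forall>x\<in>hcarrier H. GNS_rep \<omega> a (hscale H c x) = hscale H c (GNS_rep \<omega> a x)"
    by (intro allI allV) (simp add: rep_cls hscale_cls cauchy_mult cauchy_scl mult_scaleC_right)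
  show "\<exists>K. \<forall>x\<in>hcarrier H. hnorm H (GNS_rep \<omega> a x) \<le> K * hnorm H x"
  proof (intro exI[of _ "Kop a"] allV)
    fix X assume X: "cauchy X"
    show "hnorm H (GNS_rep \<omega> a (cls X)) \<le> Kop a * hnorm H (cls X)"
      unfolding rep_cls[OF X]
      by (rule LIMSEQ_le[OF hnorm_lim[OF cauchy_mult[OF X]] tendsto_mult_left[OF hnorm_lim[OF X]]])
         (auto simp: sn_mult)
  qed
qed

lemma rep_obj_GNS: "rep_obj (GNS \<omega>)"
  unfolding rep_obj_def GNS_def prod.case
proof (intro conjI)
  show "hilbert_space H" by (rule hilbert)
  show "\<forall>a. bounded_linear_op H H (GNS_rep \<omega> a)" using rep_bounded by blast
  show "\<forall>x\<in>hcarrier H. GNS_rep \<omega> 1 x = x"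
    by (intro allV) (simp add: rep_cls)
  show "\<forall>a b. \<forall>x\<in>hcarrier H. GNS_rep \<omega> (a + b) x = hadd H (GNS_rep \<omega> a x) (GNS_rep \<omega> b x)"
    by (intro allI allV) (simp add: rep_cls hadd_cls cauchy_mult distrib_right)
  show "\<forall>c a. \<forall>x\<in>hcarrier H. GNS_rep \<omega> (scaleC c a) x = hscale H c (GNS_rep \<omega> a x)"
    by (intro allI allV) (simp add: rep_cls hscale_cls cauchy_mult mult_scaleC_left)
  show "\<forall>a b. \<forall>x\<in>hcarrier H. GNS_rep \<omega> (a * b) x = GNS_rep \<omega> a (GNS_rep \<omega> b x)"
    by (intro allI allV) (simp add: rep_cls cauchy_mult mult.assoc)
  show "\<forall>a. \<forall>x\<in>hcarrier H. \<forall>y\<in>hcarrier H. hinner H (GNS_rep \<omega> (cstar a) x) y = hinner H x (GNS_rep \<omega> a y)"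
    by (intro allI allV) (simp add: rep_cls hinner_cls cauchy_mult ip_def psi_def cstar_mult cstar_cstar mult.assoc)
qed

end



lemma hom_add: "cstar_hom f \<Longrightarrow> f (x + y) = f x + f y" by (simp add: cstar_hom_def)
lemma hom_scl: "cstar_hom f \<Longrightarrow> f (scaleC c x) = scaleC c (f x)" by (simp add: cstar_hom_def)
lemma hom_cstar: "cstar_hom f \<Longrightarrow> f (cstar x) = cstar (f x)" by (simp add: cstar_hom_def)
lemma hom_mult: "cstar_hom f \<Longrightarrow> f (x * y) = f x * f y" by (simp add: cstar_hom_def)
lemma hom_one: "cstar_hom f \<Longrightarrow> f 1 = 1" by (simp add: cstar_hom_def)
lemma hom_minus: "cstar_hom f \<Longrightarrow> f (- x) = - f x"
  using hom_scl[of f "-1" x] by simp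
lemma hom_diff: "cstar_hom f \<Longrightarrow> f (x - y) = f x - f y"
  using hom_add[of f x "-y"] hom_minus[of f y] by simp
lemma hom_bnd: "cstar_hom f \<Longrightarrow> \<exists>K\<ge>0. \<forall>x. norm (f x) \<le> K * norm x"
proof -
  assume h: "cstar_hom f"
  then obtain K where K: "\<forall>x. norm (f x) \<le> K * norm x" by (auto simp: cstar_hom_def)
  have "1 \<le> K" using K[rule_format, of 1] hom_one[OF h] by simp
  thus ?thesis using K by (intro exI[of _ K]) auto
qed

lemma hom_comp: assumes f: "cstar_hom f" and g: "cstar_hom g" shows "cstar_hom (f \<circ> g)"
proof -
  obtain Kf where Kf: "Kf \<ge> 0" "\<forall>x. norm (f x) \<le> Kf * norm x" using hom_bnd[OF f] by blast
  obtain Kg where Kg: "\<forall>x. norm (g x) \<le> Kg * norm x" using hom_bnd[OF g] by blast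
  have "\<forall>x. norm (f (g x)) \<le> (Kf * Kg) * norm x"
  proof
    fix x
    have "norm (f (g x)) \<le> Kf * norm (g x)" using Kf by blast
    also have "\<dots> \<le> Kf * (Kg * norm x)" using Kg Kf(1) by (simp add: mult_left_mono)
    finally show "norm (f (g x)) \<le> (Kf * Kg) * norm x" by (simp add: mult.assoc)
  qed
  thus ?thesis using f g unfolding cstar_hom_def by auto
qed

lemma state_comp: assumes w: "is_state \<omega>" and f: "cstar_hom f" shows "is_state (\<omega> \<circ> f)"
proof -
  interpret st \<omega> using w by (simp add: st_def)
  obtain K where K: "K \<ge> 0" "\<forall>x. cmod (\<omega> x) \<le> K * norm x" using w_bnd by blast
  obtain Kf where Kf: "\<forall>x. norm (f x) \<le> Kf * norm x" using hom_bnd[OF f] by blast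
  have "\<forall>x. cmod (\<omega> (f x)) \<le> (K * Kf) * norm x"
  proof
    fix x
    have "cmod (\<omega> (f x)) \<le> K * norm (f x)" using K by blast
    also have "\<dots> \<le> K * (Kf * norm x)" using Kf K(1) by (simp add: mult_left_mono)
    finally show "cmod (\<omega> (f x)) \<le> (K * Kf) * norm x" by (simp add: mult.assoc)
  qed
  moreover have "f (cstar a * a) = cstar (f a) * f a" for a using f by (simp add: hom_mult hom_cstar)
  ultimately show ?thesis using f w_pos
    by (auto simp: is_state_def hom_add hom_scl hom_one)
qed

lemma sn_comp: "cstar_hom f \<Longrightarrow> gns_sn (\<omega> \<circ> f) x = gns_sn \<omega> (f x)"
  by (simp add: gns_sn_def hom_mult hom_cstar)

lemma cauchy_comp: "is_state \<omega> \<Longrightarrow> cstar_hom f \<Longrightarrow> gns_cauchy (\<omega> \<circ> f) X \<Longrightarrow> gns_cauchy \<omega> (\<lambda>n. f (X n))"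
  by (rule cauchy_comb[OF state_comp, where A=1 and B=0 and X=X and Y=X]) (auto simp: sn_comp hom_diff)

lemma equiv_comp: "is_state \<omega> \<Longrightarrow> cstar_hom f \<Longrightarrow> gns_equiv (\<omega> \<circ> f) X Y \<Longrightarrow> gns_equiv \<omega> (\<lambda>n. f (X n)) (\<lambda>n. f (Y n))"
  by (rule equiv_comb[OF state_comp, where A=1 and B=0 and X=X and X'=Y and Y=X and Y'=Y]) (auto simp: sn_comp hom_diff)

lemma mor_cls: assumes w: "is_state \<omega>" and f: "cstar_hom f" and X: "gns_cauchy (\<omega> \<circ> f) X"
  shows "GNS_mor f \<omega> (gns_cls (\<omega> \<circ> f) X) = gns_cls \<omega> (\<lambda>n. f (X n))"
proof -
  interpret A: st \<omega> using w by (simp add: st_def)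
  interpret B: st "\<omega> \<circ> f" using state_comp[OF w f] by (simp add: st_def)
  have "gns_equiv \<omega> (\<lambda>n. f (X n)) (\<lambda>n. f (gns_repr (gns_cls (\<omega> \<circ> f) X) n))"
    by (rule equiv_comp[OF w f]) (rule B.repr_cls[OF X])
  thus ?thesis unfolding GNS_mor_def by (rule A.cls_eqI[symmetric])
qed

theorem theorem3p5:
  shows
  "(\<forall>\<omega>::'a::cstar_algebra \<Rightarrow> complex. is_state \<omega> \<longrightarrow> rep_obj (GNS \<omega>)) \<and>
   (\<forall>(f::'b::cstar_algebra \<Rightarrow> 'a) \<omega>. cstar_hom f \<and> is_state \<omega> \<longrightarrow>
       is_state (\<omega> \<circ> f) \<and>
       intertwiner (GNS (\<omega> \<circ> f)) (Rep_map f (GNS \<omega>)) (GNS_mor f \<omega>)) \<and>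
   (\<forall>\<omega>::'a \<Rightarrow> complex. is_state \<omega> \<longrightarrow>
       (\<forall>x\<in>hcarrier (GNS_space \<omega>). GNS_mor (id::'a \<Rightarrow> 'a) \<omega> x = x)) \<and>
   (\<forall>(f::'b \<Rightarrow> 'a) (g::'c::cstar_algebra \<Rightarrow> 'b) \<omega>.
       cstar_hom f \<and> cstar_hom g \<and> is_state \<omega> \<longrightarrow>
       (\<forall>x\<in>hcarrier (GNS_space (\<omega> \<circ> f \<circ> g)).
           GNS_mor (f \<circ> g) \<omega> x = GNS_mor f \<omega> (GNS_mor g (\<omega> \<circ> f) x)))"
proof (intro conjI allI impI)
  fix \<omega> :: "'a \<Rightarrow> complex" assume "is_state \<omega>"
  thus "rep_obj (GNS \<omega>)" using st.rep_obj_GNS by (simp add: st_def)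
next
  fix f :: "'b \<Rightarrow> 'a" and \<omega> :: "'a \<Rightarrow> complex" assume a: "cstar_hom f \<and> is_state \<omega>"
  hence f: "cstar_hom f" and w: "is_state \<omega>" by auto
  show "is_state (\<omega> \<circ> f)" by (rule state_comp[OF w f])
  interpret A: st \<omega> using w by (simp add: st_def)
  interpret B: st "\<omega> \<circ> f" using state_comp[OF w f] by (simp add: st_def)
  show "intertwiner (GNS (\<omega> \<circ> f)) (Rep_map f (GNS \<omega>)) (GNS_mor f \<omega>)"
    unfolding intertwiner_def GNS_def Rep_map_def prod.case bounded_linear_op_def
  proof (intro conjI)
    show "\<forall>x\<in>hcarrier (GNS_space (\<omega> \<circ> f)). GNS_mor f \<omega> x \<in> hcarrier (GNS_space \<omega>)"
      by (intro B.allV) (simp add: mor_cls[OF w f] A.clsV cauchy_comp[OF w f])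
    show "\<forall>x\<in>hcarrier (GNS_space (\<omega> \<circ> f)). \<forall>y\<in>hcarrier (GNS_space (\<omega> \<circ> f)).
        GNS_mor f \<omega> (hadd (GNS_space (\<omega> \<circ> f)) x y) = hadd (GNS_space \<omega>) (GNS_mor f \<omega> x) (GNS_mor f \<omega> y)"
      by (intro B.allV) (simp add: mor_cls[OF w f] B.hadd_cls A.hadd_cls B.cauchy_add cauchy_comp[OF w f] hom_add[OF f])
    show "\<forall>c. \<forall>x\<in>hcarrier (GNS_space (\<omega> \<circ> f)).
        GNS_mor f \<omega> (hscale (GNS_space (\<omega> \<circ> f)) c x) = hscale (GNS_space \<omega>) c (GNS_mor f \<omega> x)"
      by (intro allI B.allV) (simp add: mor_cls[OF w f] B.hscale_cls A.hscale_cls B.cauchy_scl cauchy_comp[OF w f] hom_scl[OF f])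
    show "\<exists>K. \<forall>x\<in>hcarrier (GNS_space (\<omega> \<circ> f)). hnorm (GNS_space \<omega>) (GNS_mor f \<omega> x) \<le> K * hnorm (GNS_space (\<omega> \<circ> f)) x"
    proof (intro exI[of _ 1] B.allV)
      fix X assume X: "gns_cauchy (\<omega> \<circ> f) X"
      show "hnorm (GNS_space \<omega>) (GNS_mor f \<omega> (gns_cls (\<omega> \<circ> f) X)) \<le> 1 * hnorm (GNS_space (\<omega> \<circ> f)) (gns_cls (\<omega> \<circ> f) X)"
        unfolding mor_cls[OF w f X]
        using LIMSEQ_unique[OF A.hnorm_lim[OF cauchy_comp[OF w f X]] B.hnorm_lim[OF X, unfolded sn_comp[OF f]]]
        by simp
    qed
    show "\<forall>a. \<forall>x\<in>hcarrier (GNS_space (\<omega> \<circ> f)).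
        GNS_mor f \<omega> (GNS_rep (\<omega> \<circ> f) a x) = GNS_rep \<omega> (f a) (GNS_mor f \<omega> x)"
      by (intro allI B.allV) (simp add: mor_cls[OF w f] B.rep_cls A.rep_cls B.cauchy_mult cauchy_comp[OF w f] hom_mult[OF f])
  qed
next
  fix \<omega> :: "'a \<Rightarrow> complex" assume w: "is_state \<omega>"
  interpret A: st \<omega> using w by (simp add: st_def)
  show "\<forall>x\<in>hcarrier (GNS_space \<omega>). GNS_mor id \<omega> x = x"
    by (intro A.allV) (simp add: GNS_mor_def A.cls_repr)
next
  fix f :: "'b \<Rightarrow> 'a" and g :: "'c \<Rightarrow> 'b" and \<omega> :: "'a \<Rightarrow> complex"
  assume a: "cstar_hom f \<and> cstar_hom g \<and> is_state \<omega>"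
  hence f: "cstar_hom f" and g: "cstar_hom g" and w: "is_state \<omega>" by auto
  have wf: "is_state (\<omega> \<circ> f)" by (rule state_comp[OF w f])
  interpret C: st "\<omega> \<circ> f \<circ> g" using state_comp[OF wf g] by (simp add: st_def)
  show "\<forall>x\<in>hcarrier (GNS_space (\<omega> \<circ> f \<circ> g)). GNS_mor (f \<circ> g) \<omega> x = GNS_mor f \<omega> (GNS_mor g (\<omega> \<circ> f) x)"
  proof (intro C.allV)
    fix X assume X: "gns_cauchy (\<omega> \<circ> f \<circ> g) X"
    have e: "\<omega> \<circ> f \<circ> g = \<omega> \<circ> (f \<circ> g)" by (simp add: comp_assoc)
    have "GNS_mor (f \<circ> g) \<omega> (gns_cls (\<omega> \<circ> f \<circ> g) X) = gns_cls \<omega> (\<lambda>n. f (g (X n)))"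
      using mor_cls[OF w hom_comp[OF f g], of X] X unfolding e by simp
    moreover have "GNS_mor g (\<omega> \<circ> f) (gns_cls (\<omega> \<circ> f \<circ> g) X) = gns_cls (\<omega> \<circ> f) (\<lambda>n. g (X n))"
      by (rule mor_cls[OF wf g X])
    moreover have "GNS_mor f \<omega> (gns_cls (\<omega> \<circ> f) (\<lambda>n. g (X n))) = gns_cls \<omega> (\<lambda>n. f (g (X n)))"
      by (rule mor_cls[OF w f cauchy_comp[OF wf g X]])
    ultimately show "GNS_mor (f \<circ> g) \<omega> (gns_cls (\<omega> \<circ> f \<circ> g) X) = GNS_mor f \<omega> (GNS_mor g (\<omega> \<circ> f) (gns_cls (\<omega> \<circ> f \<circ> g) X))"
      by simp
  qed
qed


end
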